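(* Suppose that for an agent $m$ and iteration $k$, $$ \mathbb{E}_{\sigma_k}\Big((\theta_{k+1}^m-\theta_k^m)^\top\phi-\beta_k^{-1}\hat Q^{1:m}_{\boldsymbol{\pi}_{\theta_k}}\Big)^2\le(\epsilon_k^m)^2,\qquad \mathbb{E}_{\sigma_k}\Big(\hat Q^{1:m}_{\boldsymbol{\pi}_{\theta_k}}-Q^{1:m}_{\boldsymbol{\pi}_{\theta_k}}\Big)^2\le(\xi_k^m)^2, $$ where all functions are evaluated at $(s,\mathbf{a}^{1:m-1},a^m)$. Let $\pi^m_{k+1}(\cdot|s,\mathbf{a}^{1:m-1})\propto\exp\{\beta_k^{-1}Q^{1:m}_{\boldsymbol{\pi}_{\theta_k}}(s,\mathbf{a}^{1:m-1},\cdot)+\phi^\top(s,\mathbf{a}^{1:m-1},\cdot)\theta_k^m\}$. Then $$ \Big|\mathbb{E}_{s\sim\nu_*,\ \mathbf{a}^{1:m-1}\sim\boldsymbol{\pi}_*^{1:m-1}}\Big\langle\log\frac{\pi_{\theta_{k+1}^m}(\cdot|s,\mathbf{a}^{1:m-1})}{\pi^m_{k+1}(\cdot|s,\mathbf{a}^{1:m-1})},\ \pi_*^m(\cdot|s,\mathbf{a}^{1:m-1})-\pi_{\theta_k^m}(\cdot|s,\mathbf{a}^{1:m-1})\Big\rangle\Big|\le\Delta_k^m, $$ where $\Delta_k^m=\sqrt2(\phi_k^m+\phi_k^{m-1})\big(\epsilon_k^m+\frac{\xi_k^m}{\beta_k}\big)$.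
   Context: Fully cooperative Markov game with agents $\{1,\dots,N\}$, finite state space $\mathcal{S}$, finite individual action space $\mathcal{A}$. Joint policies in sequential conditional form $\boldsymbol{\pi}(\mathbf{a}|s)=\prod_m\pi^m(a^m|s,\mathbf{a}^{1:m-1})$; $\boldsymbol{\pi}^{1:m}$ is the induced law of $\mathbf{a}^{1:m}$; $Q^{1:m}_{\boldsymbol{\pi}}$ is the expected joint action-value given $\mathbf{a}^{1:m}$ when the other agents follow $\boldsymbol{\pi}$. Log-linear policies $\pi_{\theta^m}(a^m|s,\mathbf{a}^{1:m-1})\propto\exp(\phi^\top(s,\mathbf{a}^{1:m-1},a^m)\theta^m)$, $\|\phi\|_2\le1$. $\boldsymbol{\pi}_{\theta_k}$ is the current joint policy with parameters $\theta_k^1,\dots,\theta_k^N$, $\nu_k$ its stationary state distribution, $\sigma_k$ the law of $(s,\mathbf{a}^{1:m-1},a^m)$ with $s\sim\nu_k$, $\mathbf{a}^{1:m}\sim\boldsymbol{\pi}_{\theta_k}^{1:m}(\cdot|s)$. $\boldsymbol{\pi}_*$ is an optimal joint policy with stationary state distribution $\nu_*$. $\theta^m_{k+1}\in\mathbb{R}^d$, $\beta_k>0$, $\hat Q^{1:m}_{\boldsymbol{\pi}_{\theta_k}}$ is an estimator. $\langle\cdot,\cdot\rangle$ is the inner product over $\mathcal{A}$. Concentrability: $\phi_k^m=\big\|\frac{d(\nu_*\boldsymbol{\pi}_*^{1:m})}{d(\nu_k\boldsymbol{\pi}_{\theta_k}^{1:m})}\big\|_{2,\sigma_k}$ for $m\ge0$,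 with $\|f\|_{2,\rho}=(\sum\rho|f|^2)^{1/2}$. *)

theory Defs
  imports "HOL-Analysis.Analysis"
begin

text \<open>
Agents are indexed 1..N. A joint policy in sequential conditional form is
a function pol with pol j s pre a = pi^j(a | s, a^{1:j-1}) where pre = a^{1:j-1} is a list
of length j-1. Joint actions are lists of length N.
\<close>

definition lists_len :: "nat \<Rightarrow> 'a list set" where
  "lists_len n = {xs. length xs = n}"

definition jprob :: "(nat \<Rightarrow> 's \<Rightarrow> 'a list \<Rightarrow> 'a \<Rightarrow> real) \<Rightarrow> 's \<Rightarrow> 'a list \<Rightarrow> real" where
  "jprob pol s as = (\<Prod>j<length as. pol (Suc j) s (take j as) (as ! j))"

definition cond_prob :: "(nat \<Rightarrow> 's \<Rightarrow> 'a list \<Rightarrow> 'a \<Rightarrow> real) \<Rightarrow> 's \<Rightarrow> 'a list \<Rightarrow> 'a list \<Rightarrow> real" where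
  "cond_prob pol s pre rest =
     (\<Prod>j<length rest. pol (length pre + j + 1) s (pre @ take j rest) (rest ! j))"

definition is_policy :: "nat \<Rightarrow> (nat \<Rightarrow> 's \<Rightarrow> 'a::finite list \<Rightarrow> 'a \<Rightarrow> real) \<Rightarrow> bool" where
  "is_policy N pol \<longleftrightarrow>
     (\<forall>j\<in>{1..N}. \<forall>s pre. length pre = j - 1 \<longrightarrow>
        (\<forall>a. 0 \<le> pol j s pre a) \<and> (\<Sum>a\<in>UNIV. pol j s pre a) = 1)"

definition loglin :: "('s \<Rightarrow> 'a::finite list \<Rightarrow> 'a \<Rightarrow> real ^ 'd) \<Rightarrow> real ^ 'd \<Rightarrow> 's \<Rightarrow> 'a list \<Rightarrow> 'a \<Rightarrow> real" where
  "loglin feat th s pre a =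
     exp (feat s pre a \<bullet> th) / (\<Sum>b\<in>UNIV. exp (feat s pre b \<bullet> th))"

definition step_op :: "nat \<Rightarrow> ('s::finite \<Rightarrow> 'a::finite list \<Rightarrow> 's \<Rightarrow> real)
    \<Rightarrow> (nat \<Rightarrow> 's \<Rightarrow> 'a list \<Rightarrow> 'a \<Rightarrow> real) \<Rightarrow> ('s \<Rightarrow> real) \<Rightarrow> 's \<Rightarrow> real" where
  "step_op N P pol f s = (\<Sum>as\<in>lists_len N. jprob pol s as * (\<Sum>s'\<in>UNIV. P s as s' * f s'))"

definition rew_pol :: "nat \<Rightarrow> ('s \<Rightarrow> 'a::finite list \<Rightarrow> real)
    \<Rightarrow> (nat \<Rightarrow> 's \<Rightarrow> 'a list \<Rightarrow> 'a \<Rightarrow> real) \<Rightarrow> 's \<Rightarrow> real" where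
  "rew_pol N r pol s = (\<Sum>as\<in>lists_len N. jprob pol s as * r s as)"

definition Vf :: "nat \<Rightarrow> ('s::finite \<Rightarrow> 'a::finite list \<Rightarrow> 's \<Rightarrow> real) \<Rightarrow> ('s \<Rightarrow> 'a list \<Rightarrow> real)
    \<Rightarrow> real \<Rightarrow> (nat \<Rightarrow> 's \<Rightarrow> 'a list \<Rightarrow> 'a \<Rightarrow> real) \<Rightarrow> 's \<Rightarrow> real" where
  "Vf N P r gam pol s = (\<Sum>t. gam ^ t * ((step_op N P pol ^^ t) (rew_pol N r pol) s))"

definition Qf :: "nat \<Rightarrow> ('s::finite \<Rightarrow> 'a::finite list \<Rightarrow> 's \<Rightarrow> real) \<Rightarrow> ('s \<Rightarrow> 'a list \<Rightarrow> real)
    \<Rightarrow> real \<Rightarrow> (nat \<Rightarrow> 's \<Rightarrow> 'a list \<Rightarrow> 'a \<Rightarrow> real) \<Rightarrow> 's \<Rightarrow> 'a list \<Rightarrow> real" where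
  "Qf N P r gam pol s as = r s as + gam * (\<Sum>s'\<in>UNIV. P s as s' * Vf N P r gam pol s')"

definition Q1m :: "nat \<Rightarrow> ('s::finite \<Rightarrow> 'a::finite list \<Rightarrow> 's \<Rightarrow> real) \<Rightarrow> ('s \<Rightarrow> 'a list \<Rightarrow> real)
    \<Rightarrow> real \<Rightarrow> (nat \<Rightarrow> 's \<Rightarrow> 'a list \<Rightarrow> 'a \<Rightarrow> real) \<Rightarrow> 's \<Rightarrow> 'a list \<Rightarrow> real" where
  "Q1m N P r gam pol s am =
     (\<Sum>rest\<in>lists_len (N - length am). cond_prob pol s am rest * Qf N P r gam pol s (am @ rest))"

definition is_stationary :: "nat \<Rightarrow> ('s::finite \<Rightarrow> 'a::finite list \<Rightarrow> 's \<Rightarrow> real)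
    \<Rightarrow> (nat \<Rightarrow> 's \<Rightarrow> 'a list \<Rightarrow> 'a \<Rightarrow> real) \<Rightarrow> ('s \<Rightarrow> real) \<Rightarrow> bool" where
  "is_stationary N P pol \<nu> \<longleftrightarrow> (\<forall>s. 0 \<le> \<nu> s) \<and> (\<Sum>s\<in>UNIV. \<nu> s) = 1 \<and>
     (\<forall>s'. \<nu> s' = (\<Sum>s\<in>UNIV. \<nu> s * (\<Sum>as\<in>lists_len N. jprob pol s as * P s as s')))"

definition is_optimal :: "nat \<Rightarrow> ('s::finite \<Rightarrow> 'a::finite list \<Rightarrow> 's \<Rightarrow> real) \<Rightarrow> ('s \<Rightarrow> 'a list \<Rightarrow> real)
    \<Rightarrow> real \<Rightarrow> (nat \<Rightarrow> 's \<Rightarrow> 'a list \<Rightarrow> 'a \<Rightarrow> real) \<Rightarrow> bool" where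
  "is_optimal N P r gam pol \<longleftrightarrow> is_policy N pol \<and>
     (\<forall>pol'. is_policy N pol' \<longrightarrow> (\<forall>s. Vf N P r gam pol' s \<le> Vf N P r gam pol s))"

text \<open>Concentrability coefficient phi^j_k for j \<le> m: the L2(sigma_k)-norm of the density
  d(nu_* pi_*^{1:j}) / d(nu_k pi_k^{1:j}), where sigma_k is the law of (s, a^{1:m}) under
  nu_k and pi_k. Under absolute continuity (assumed in the theorem) the density is the ratio
  below on the support of sigma_k (points outside the support do not contribute).\<close>
definition conc :: "nat \<Rightarrow> nat \<Rightarrow> ('s::finite \<Rightarrow> real) \<Rightarrow> (nat \<Rightarrow> 's \<Rightarrow> 'a::finite list \<Rightarrow> 'a \<Rightarrow> real)
    \<Rightarrow> ('s \<Rightarrow> real) \<Rightarrow> (nat \<Rightarrow> 's \<Rightarrow> 'a list \<Rightarrow> 'a \<Rightarrow> real) \<Rightarrow> real" where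
  "conc m j \<nu>k polk \<nu>s pols =
     sqrt (\<Sum>s\<in>UNIV. \<Sum>as\<in>lists_len m. \<nu>k s * jprob polk s as *
        ((\<nu>s s * jprob pols s (take j as)) / (\<nu>k s * jprob polk s (take j as)))\<^sup>2)"

end

theory Submission
  imports Defs
begin

lemma finite_lists_len[simp]: "finite (lists_len n :: 'a::finite list set)"
  using finite_lists_length_eq[of "UNIV::'a set" n] by (simp add: lists_len_def)

lemma T3_flat: "(\<Sum>s\<in>(A::'s set). \<Sum>pre\<in>B. \<Sum>a\<in>(C::'a set). F s pre a :: real) = (\<Sum>(s,pre,a)\<in>A \<times> B \<times> C. F s pre a)"
  by (simp add: sum.cartesian_product)

lemma wcs:
  fixes w x y :: "'i \<Rightarrow> real"
  assumes "\<And>i. i \<in> I \<Longrightarrow> 0 \<le> w i"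
  shows "\<bar>\<Sum>i\<in>I. w i * x i * y i\<bar> \<le> sqrt (\<Sum>i\<in>I. w i * (x i)\<^sup>2) * sqrt (\<Sum>i\<in>I. w i * (y i)\<^sup>2)"
proof -
  have e: "(\<Sum>i\<in>I. w i * x i * y i) = (\<Sum>i\<in>I. (sqrt (w i) * x i) * (sqrt (w i) * y i))"
    using assms by (intro sum.cong) (auto simp: algebra_simps real_sqrt_mult_self)
  have e1: "(\<Sum>i\<in>I. w i * (x i)\<^sup>2) = (\<Sum>i\<in>I. (sqrt (w i) * x i)\<^sup>2)"
    using assms by (intro sum.cong) (auto simp: power_mult_distrib)
  have e2: "(\<Sum>i\<in>I. w i * (y i)\<^sup>2) = (\<Sum>i\<in>I. (sqrt (w i) * y i)\<^sup>2)"
    using assms by (intro sum.cong) (auto simp: power_mult_distrib)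
  have "(\<Sum>i\<in>I. w i * x i * y i)\<^sup>2 \<le> (\<Sum>i\<in>I. w i * (x i)\<^sup>2) * (\<Sum>i\<in>I. w i * (y i)\<^sup>2)"
    unfolding e e1 e2 by (rule Cauchy_Schwarz_ineq_sum)
  then have "sqrt ((\<Sum>i\<in>I. w i * x i * y i)\<^sup>2) \<le> sqrt ((\<Sum>i\<in>I. w i * (x i)\<^sup>2) * (\<Sum>i\<in>I. w i * (y i)\<^sup>2))"
    using real_sqrt_le_mono by blast
  then show ?thesis by (simp add: real_sqrt_mult)
qed

lemma jprob_snoc: "length pre = k \<Longrightarrow> jprob pol s (pre @ [a]) = jprob pol s pre * pol (Suc k) s pre a"
  unfolding jprob_def by (simp add: nth_append)

lemma sum_lists_snoc:
  "(\<Sum>as\<in>lists_len (Suc n). g as) = (\<Sum>pre\<in>lists_len n. \<Sum>a\<in>(UNIV::'a::finite set). (g (pre @ [a]) :: real))"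
proof -
  have bij: "bij_betw (\<lambda>(pre,a). pre @ [a]) (lists_len n \<times> (UNIV::'a set)) (lists_len (Suc n))"
    unfolding bij_betw_def
  proof
    show "inj_on (\<lambda>(pre, a). pre @ [a]) (lists_len n \<times> UNIV)"
      by (auto simp: inj_on_def)
    show "(\<lambda>(pre, a). pre @ [a]) ` (lists_len n \<times> UNIV) = lists_len (Suc n)"
    proof
      show "(\<lambda>(pre, a). pre @ [a]) ` (lists_len n \<times> UNIV) \<subseteq> lists_len (Suc n)"
        by (auto simp: lists_len_def)
      show "lists_len (Suc n) \<subseteq> (\<lambda>(pre, a). pre @ [a]) ` (lists_len n \<times> UNIV)"
      proof
        fix xs assume "xs \<in> lists_len (Suc n)"
        then have "length xs = Suc n" by (simp add: lists_len_def)
        then have "xs = butlast xs @ [last xs]" "length (butlast xs) = n"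
          by (auto intro: append_butlast_last_id[symmetric])
        note h = this
        have "(butlast xs, last xs) \<in> lists_len n \<times> UNIV" using h by (simp add: lists_len_def)
        then show "xs \<in> (\<lambda>(pre, a). pre @ [a]) ` (lists_len n \<times> UNIV)"
          using h(1) by (metis (no_types, lifting) case_prod_conv image_eqI)
      qed
    qed
  qed
  show ?thesis
    using sum.reindex_bij_betw[OF bij, of g, symmetric]
    by (simp add: sum.cartesian_product split_def)
qed

lemma loglin_pos: "0 < loglin feat th s pre a"
  unfolding loglin_def by (intro divide_pos_pos) (auto intro: sum_pos)

lemma loglin_sum: "(\<Sum>a\<in>UNIV. loglin feat th s pre a) = 1"
  unfolding loglin_def
  by (simp add: sum_divide_distrib[symmetric]) (metis (no_types) less_irrefl sum_pos exp_gt_zero finite UNIV_not_empty)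

lemma jprob_pos: "(\<And>j s pre a. 0 < pol j s pre a) \<Longrightarrow> 0 < jprob pol s as"
  unfolding jprob_def by (intro prod_pos) auto

lemma wcs3:
  fixes w x y :: "'s \<Rightarrow> 'l \<Rightarrow> 'a \<Rightarrow> real"
  assumes "\<And>s pre a. 0 \<le> w s pre a"
  shows "\<bar>\<Sum>s\<in>A. \<Sum>pre\<in>B. \<Sum>a\<in>C. w s pre a * x s pre a * y s pre a\<bar>
     \<le> sqrt (\<Sum>s\<in>A. \<Sum>pre\<in>B. \<Sum>a\<in>C. w s pre a * (x s pre a)\<^sup>2) * sqrt (\<Sum>s\<in>A. \<Sum>pre\<in>B. \<Sum>a\<in>C. w s pre a * (y s pre a)\<^sup>2)"
  using wcs[of "A \<times> B \<times> C" "\<lambda>(s,pre,a). w s pre a" "\<lambda>(s,pre,a). x s pre a" "\<lambda>(s,pre,a). y s pre a"] assms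
  by (simp add: T3_flat case_prod_unfold)



theorem lemma6:
  fixes N m :: nat
    and P :: "'s::finite \<Rightarrow> 'a::finite list \<Rightarrow> 's \<Rightarrow> real"
    and r :: "'s \<Rightarrow> 'a list \<Rightarrow> real"
    and gam :: real
    and feat :: "'s \<Rightarrow> 'a list \<Rightarrow> 'a \<Rightarrow> real ^ 'd"
    and \<theta>k :: "nat \<Rightarrow> real ^ 'd"
    and \<theta>next :: "real ^ 'd"
    and \<nu>k \<nu>s :: "'s \<Rightarrow> real"
    and pols :: "nat \<Rightarrow> 's \<Rightarrow> 'a list \<Rightarrow> 'a \<Rightarrow> real"
    and \<beta> \<epsilon> \<xi> :: real
    and Qhat :: "'s \<Rightarrow> 'a list \<Rightarrow> 'a \<Rightarrow> real"
  defines "polk \<equiv> (\<lambda>j. loglin feat (\<theta>k j))"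
  defines "Q \<equiv> (\<lambda>s pre a. Q1m N P r gam polk s (pre @ [a]))"
  defines "\<sigma>k \<equiv> (\<lambda>s pre a. \<nu>k s * jprob polk s (pre @ [a]))"
  defines "pinext \<equiv> (\<lambda>s pre a. exp (Q s pre a / \<beta> + feat s pre a \<bullet> \<theta>k m)
                          / (\<Sum>b\<in>UNIV. exp (Q s pre b / \<beta> + feat s pre b \<bullet> \<theta>k m)))"
  assumes N: "1 \<le> N" and m: "m \<in> {1..N}"
    and gam: "0 \<le> gam" "gam < 1"
    and P: "\<forall>s as. length as = N \<longrightarrow> (\<forall>s'. 0 \<le> P s as s') \<and> (\<Sum>s'\<in>UNIV. P s as s') = 1"
    and feat: "\<forall>s pre a. norm (feat s pre a) \<le> 1"
    and stat_k: "is_stationary N P polk \<nu>k"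
    and opt: "is_optimal N P r gam pols"
    and stat_s: "is_stationary N P pols \<nu>s"
    and abs_cont: "\<forall>s. \<nu>k s = 0 \<longrightarrow> \<nu>s s = 0"
    and \<beta>: "0 < \<beta>"
    and \<epsilon>: "0 \<le> \<epsilon>" and \<xi>: "0 \<le> \<xi>"
    and err1: "(\<Sum>s\<in>UNIV. \<Sum>pre\<in>lists_len (m - 1). \<Sum>a\<in>UNIV. \<sigma>k s pre a *
                 ((\<theta>next - \<theta>k m) \<bullet> feat s pre a - Qhat s pre a / \<beta>)\<^sup>2) \<le> \<epsilon>\<^sup>2"
    and err2: "(\<Sum>s\<in>UNIV. \<Sum>pre\<in>lists_len (m - 1). \<Sum>a\<in>UNIV. \<sigma>k s pre a *
                 (Qhat s pre a - Q s pre a)\<^sup>2) \<le> \<xi>\<^sup>2"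
  shows "\<bar>\<Sum>s\<in>UNIV. \<Sum>pre\<in>lists_len (m - 1). \<nu>s s * jprob pols s pre *
            (\<Sum>a\<in>UNIV. ln (loglin feat \<theta>next s pre a / pinext s pre a) *
                        (pols m s pre a - loglin feat (\<theta>k m) s pre a))\<bar>
         \<le> sqrt 2 * (conc m m \<nu>k polk \<nu>s pols + conc m (m - 1) \<nu>k polk \<nu>s pols) * (\<epsilon> + \<xi> / \<beta>)"

proof -
  let ?L = "lists_len (m - 1) :: 'a list set"
  have mS: "Suc (m - 1) = m" using m by auto
  have pk_pos: "\<And>j s pre a. 0 < polk j s pre a" by (simp add: polk_def loglin_pos)
  have nuk0: "\<And>s. 0 \<le> \<nu>k s" using stat_k unfolding is_stationary_def by blast
  have nus0: "\<And>s. 0 \<le> \<nu>s s" using stat_s unfolding is_stationary_def by blast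
  have jk_pos: "\<And>s as. 0 < jprob polk s as" by (rule jprob_pos[OF pk_pos])
  have ps_sum: "\<And>s pre. pre \<in> ?L \<Longrightarrow> (\<Sum>a\<in>UNIV. pols m s pre a) = 1"
    using opt m by (auto simp: is_optimal_def is_policy_def lists_len_def)
  have pk_sum: "\<And>s pre. (\<Sum>a\<in>UNIV. polk m s pre a) = 1"
    by (simp add: polk_def loglin_sum)
  define u where "u s pre a = (\<theta>next - \<theta>k m) \<bullet> feat s pre a - Q s pre a / \<beta>" for s pre a
  define x1 where "x1 s pre a = \<nu>s s * jprob pols s (pre@[a]) / (\<nu>k s * jprob polk s (pre@[a]))" for s pre a
  define x2 where "x2 s pre a = \<nu>s s * jprob pols s pre / (\<nu>k s * jprob polk s pre)" for s pre and a :: 'a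
  have w0: "\<And>s pre a. 0 \<le> \<sigma>k s pre a"
    unfolding \<sigma>k_def using nuk0 jk_pos by (simp add: less_imp_le)
  have step1: "(\<Sum>a\<in>UNIV. ln (loglin feat \<theta>next s pre a / pinext s pre a) *
                        (pols m s pre a - loglin feat (\<theta>k m) s pre a))
      = (\<Sum>a\<in>UNIV. u s pre a * (pols m s pre a - polk m s pre a))" if pre: "pre \<in> ?L" for s pre
  proof -
    define Z1 where "Z1 = (\<Sum>b\<in>UNIV. exp (feat s pre b \<bullet> \<theta>next))"
    define Z2 where "Z2 = (\<Sum>b\<in>UNIV. exp (Q s pre b / \<beta> + feat s pre b \<bullet> \<theta>k m))"
    have Z1: "0 < Z1" unfolding Z1_def by (intro sum_pos) auto
    have Z2: "0 < Z2" unfolding Z2_def by (intro sum_pos) auto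
    have l: "ln (loglin feat \<theta>next s pre a / pinext s pre a) = u s pre a + (ln Z2 - ln Z1)" for a
    proof -
      have "loglin feat \<theta>next s pre a / pinext s pre a
          = exp (feat s pre a \<bullet> \<theta>next - (Q s pre a / \<beta> + feat s pre a \<bullet> \<theta>k m)) * (Z2 / Z1)"
        unfolding loglin_def pinext_def Z1_def[symmetric] Z2_def[symmetric]
        using Z1 Z2 by (simp add: exp_diff field_simps)
      also have "ln \<dots> = (feat s pre a \<bullet> \<theta>next - (Q s pre a / \<beta> + feat s pre a \<bullet> \<theta>k m)) + (ln Z2 - ln Z1)"
        using Z1 Z2 by (simp add: ln_mult ln_div)
      finally show ?thesis unfolding u_def by (simp add: inner_diff_left inner_commute)
    qed
    have "(\<Sum>a\<in>UNIV. ln (loglin feat \<theta>next s pre a / pinext s pre a) *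
                        (pols m s pre a - loglin feat (\<theta>k m) s pre a))
        = (\<Sum>a\<in>UNIV. u s pre a * (pols m s pre a - polk m s pre a)) +
          (ln Z2 - ln Z1) * ((\<Sum>a\<in>UNIV. pols m s pre a) - (\<Sum>a\<in>UNIV. polk m s pre a))"
      unfolding l by (simp add: polk_def algebra_simps sum.distrib sum_subtractf sum_distrib_left)
    also have "\<dots> = (\<Sum>a\<in>UNIV. u s pre a * (pols m s pre a - polk m s pre a))"
      using ps_sum[OF pre] pk_sum by simp
    finally show ?thesis .
  qed
  have step2: "\<nu>s s * jprob pols s pre * (u s pre a * (pols m s pre a - polk m s pre a))
      = \<sigma>k s pre a * x1 s pre a * u s pre a - \<sigma>k s pre a * x2 s pre a * u s pre a"
    if pre: "pre \<in> ?L" for s pre a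
  proof (cases "\<nu>k s = 0")
    case True
    then have "\<nu>s s = 0" using abs_cont by auto
    then show ?thesis using True by (simp add: \<sigma>k_def x1_def x2_def)
  next
    case False
    have len: "length pre = m - 1" using pre by (simp add: lists_len_def)
    have js: "jprob pols s (pre@[a]) = jprob pols s pre * pols m s pre a"
      by (rule jprob_snoc[OF len, unfolded mS])
    have jk: "jprob polk s (pre@[a]) = jprob polk s pre * polk m s pre a"
      by (rule jprob_snoc[OF len, unfolded mS])
    have p1: "0 < jprob polk s pre" "0 < polk m s pre a" using jk_pos pk_pos by auto
    show ?thesis unfolding \<sigma>k_def x1_def x2_def js jk using False p1
      by (simp add: field_simps)
  qed
  define A where "A = (\<Sum>s\<in>UNIV. \<Sum>pre\<in>?L. \<Sum>a\<in>UNIV. \<sigma>k s pre a * x1 s pre a * u s pre a)"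
  define B where "B = (\<Sum>s\<in>UNIV. \<Sum>pre\<in>?L. \<Sum>a\<in>UNIV. \<sigma>k s pre a * x2 s pre a * u s pre a)"
  define S where "S = sqrt (\<Sum>s\<in>UNIV. \<Sum>pre\<in>?L. \<Sum>a\<in>UNIV. \<sigma>k s pre a * (u s pre a)\<^sup>2)"
  define c1 where "c1 = conc m m \<nu>k polk \<nu>s pols"
  define c2 where "c2 = conc m (m - 1) \<nu>k polk \<nu>s pols"
  have lhs: "(\<Sum>s\<in>UNIV. \<Sum>pre\<in>?L. \<nu>s s * jprob pols s pre *
            (\<Sum>a\<in>UNIV. ln (loglin feat \<theta>next s pre a / pinext s pre a) *
                        (pols m s pre a - loglin feat (\<theta>k m) s pre a))) = A - B"
  proof -
    have "(\<Sum>s\<in>UNIV. \<Sum>pre\<in>?L. \<nu>s s * jprob pols s pre *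
            (\<Sum>a\<in>UNIV. ln (loglin feat \<theta>next s pre a / pinext s pre a) *
                        (pols m s pre a - loglin feat (\<theta>k m) s pre a)))
        = (\<Sum>s\<in>UNIV. \<Sum>pre\<in>?L. \<Sum>a\<in>UNIV. \<sigma>k s pre a * x1 s pre a * u s pre a - \<sigma>k s pre a * x2 s pre a * u s pre a)"
    proof (intro sum.cong refl)
      fix s pre assume pre: "pre \<in> ?L"
      show "\<nu>s s * jprob pols s pre *
            (\<Sum>a\<in>UNIV. ln (loglin feat \<theta>next s pre a / pinext s pre a) *
                        (pols m s pre a - loglin feat (\<theta>k m) s pre a))
          = (\<Sum>a\<in>UNIV. \<sigma>k s pre a * x1 s pre a * u s pre a - \<sigma>k s pre a * x2 s pre a * u s pre a)"
        unfolding step1[OF pre] sum_distrib_left using step2[OF pre] by simp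
    qed
    also have "\<dots> = A - B" unfolding A_def B_def by (simp add: sum_subtractf)
    finally show ?thesis .
  qed
  have conc_eq: "conc m j \<nu>k polk \<nu>s pols = sqrt (\<Sum>s\<in>UNIV. \<Sum>pre\<in>?L. \<Sum>a\<in>UNIV. \<sigma>k s pre a *
       ((\<nu>s s * jprob pols s (take j (pre @ [a]))) / (\<nu>k s * jprob polk s (take j (pre @ [a]))))\<^sup>2)" for j
    unfolding conc_def \<sigma>k_def
    by (subst mS[symmetric], subst sum_lists_snoc) simp
  have mm: "m - (m - Suc 0) = Suc 0" using m by auto
  have c1: "c1 = sqrt (\<Sum>s\<in>UNIV. \<Sum>pre\<in>?L. \<Sum>a\<in>UNIV. \<sigma>k s pre a * (x1 s pre a)\<^sup>2)"
    unfolding c1_def conc_eq x1_def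
    by (intro arg_cong[where f=sqrt] sum.cong refl) (auto simp: lists_len_def mm)
  have c2: "c2 = sqrt (\<Sum>s\<in>UNIV. \<Sum>pre\<in>?L. \<Sum>a\<in>UNIV. \<sigma>k s pre a * (x2 s pre a)\<^sup>2)"
    unfolding c2_def conc_eq x2_def
    by (intro arg_cong[where f=sqrt] sum.cong refl) (auto simp: lists_len_def)
  have A: "\<bar>A\<bar> \<le> c1 * S" unfolding A_def c1 S_def by (rule wcs3[OF w0])
  have B: "\<bar>B\<bar> \<le> c2 * S" unfolding B_def c2 S_def by (rule wcs3[OF w0])
  have c1p: "0 \<le> c1" unfolding c1 using w0 by (intro real_sqrt_ge_zero sum_nonneg mult_nonneg_nonneg) auto
  have c2p: "0 \<le> c2" unfolding c2 using w0 by (intro real_sqrt_ge_zero sum_nonneg mult_nonneg_nonneg) auto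
  define e1 where "e1 s pre a = (\<theta>next - \<theta>k m) \<bullet> feat s pre a - Qhat s pre a / \<beta>" for s pre a
  define e2 where "e2 s pre a = Qhat s pre a - Q s pre a" for s pre a
  have pw: "\<sigma>k s pre a * (u s pre a)\<^sup>2 \<le> 2 * (\<sigma>k s pre a * (e1 s pre a)\<^sup>2) + 2 / \<beta>\<^sup>2 * (\<sigma>k s pre a * (e2 s pre a)\<^sup>2)" for s pre a
  proof -
    have ue: "u s pre a = e1 s pre a + e2 s pre a / \<beta>"
      unfolding u_def e1_def e2_def using \<beta> by (simp add: field_simps)
    have "(e1 s pre a + e2 s pre a / \<beta>)\<^sup>2 \<le> 2 * (e1 s pre a)\<^sup>2 + 2 * (e2 s pre a / \<beta>)\<^sup>2"
      using zero_le_power2[of "e1 s pre a - e2 s pre a / \<beta>"] by (simp add: power2_eq_square algebra_simps)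
    then have "(u s pre a)\<^sup>2 \<le> 2 * (e1 s pre a)\<^sup>2 + 2 / \<beta>\<^sup>2 * (e2 s pre a)\<^sup>2"
      unfolding ue by (simp add: power_divide)
    from mult_left_mono[OF this w0[of s pre a]] show ?thesis by (simp add: algebra_simps)
  qed
  have "(\<Sum>s\<in>UNIV. \<Sum>pre\<in>?L. \<Sum>a\<in>UNIV. \<sigma>k s pre a * (u s pre a)\<^sup>2)
      \<le> (\<Sum>s\<in>UNIV. \<Sum>pre\<in>?L. \<Sum>a\<in>UNIV. 2 * (\<sigma>k s pre a * (e1 s pre a)\<^sup>2) + 2 / \<beta>\<^sup>2 * (\<sigma>k s pre a * (e2 s pre a)\<^sup>2))"
    by (intro sum_mono pw)
  also have "\<dots> = 2 * (\<Sum>s\<in>UNIV. \<Sum>pre\<in>?L. \<Sum>a\<in>UNIV. \<sigma>k s pre a * (e1 s pre a)\<^sup>2)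
       + 2 / \<beta>\<^sup>2 * (\<Sum>s\<in>UNIV. \<Sum>pre\<in>?L. \<Sum>a\<in>UNIV. \<sigma>k s pre a * (e2 s pre a)\<^sup>2)"
    by (simp add: sum.distrib sum_distrib_left)
  also have "\<dots> \<le> 2 * \<epsilon>\<^sup>2 + 2 / \<beta>\<^sup>2 * \<xi>\<^sup>2"
    using err1 err2 \<beta> unfolding e1_def e2_def
    by (intro add_mono mult_left_mono) auto
  also have "\<dots> \<le> 2 * (\<epsilon> + \<xi> / \<beta>)\<^sup>2"
  proof -
    have "0 \<le> \<epsilon> * \<xi> / \<beta>" "0 \<le> \<epsilon> * (\<xi> * 4) / \<beta>" using \<epsilon> \<xi> \<beta> by simp_all
    then show ?thesis by (simp add: power2_eq_square algebra_simps power_divide)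
  qed
  finally have "S \<le> sqrt (2 * (\<epsilon> + \<xi> / \<beta>)\<^sup>2)" unfolding S_def using real_sqrt_le_mono by blast
  also have "\<dots> = sqrt 2 * (\<epsilon> + \<xi> / \<beta>)" using \<epsilon> \<xi> \<beta> by (simp add: real_sqrt_mult)
  finally have Sb: "S \<le> sqrt 2 * (\<epsilon> + \<xi> / \<beta>)" .
  have "\<bar>A - B\<bar> \<le> (c1 + c2) * S" using A B by (simp add: algebra_simps abs_triangle_ineq4 order_trans[OF abs_triangle_ineq4])
  also have "\<dots> \<le> (c1 + c2) * (sqrt 2 * (\<epsilon> + \<xi> / \<beta>))" using c1p c2p Sb by (intro mult_left_mono) auto
  finally show ?thesis unfolding lhs c1_def[symmetric] c2_def[symmetric] by (simp add: mult_ac)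
qed

end
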